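(* Define words $w_{[n]}$ over $\{1,-1\}$ of length $3^n$ by $w_{[0]}=1$ and $w_{[n+1]}=w_{[n]}\,w_{[n]}\,w_{[n]}'$, where $w_{[n]}'$ is obtained from $w_{[n]}$ by changing its middle symbol (the symbol in position $(3^n+1)/2$, which is $1$) from $1$ to $-1$. Then $w_{[n]}$ is a prefix of $w_{[n+1]}$ for all $n$, so the limit $\lim_{n\to\infty}w_{[n]}$ is a well-defined infinite sequence, and it equals $w_\alpha$.
   Context: $w_\alpha=\lim_{n\to\infty}\phi^n(1)$, where $\phi$ is the monoid endomorphism of $\{1,-1\}^*$ determined by $\phi(1)=1\,1\,(-1)$ and $\phi(-1)=1\,(-1)\,(-1)$. *)

theory Defs
  imports Main "HOL-Library.Sublist"
begin

text \<open>Words over the alphabet {1,-1} are represented as int lists (finite words)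
  and as functions nat => int (infinite words).\<close>

definition phi_sym :: "int \<Rightarrow> int list" where
  "phi_sym x = (if x = 1 then [1, 1, -1] else [1, -1, -1])"

definition phi :: "int list \<Rightarrow> int list" where
  "phi xs = concat (map phi_sym xs)"

text \<open>Limit of a sequence of finite words: position k is eventually defined and
  eventually constant equal to w k (convergence in the product topology).\<close>
definition word_limit :: "(nat \<Rightarrow> int list) \<Rightarrow> (nat \<Rightarrow> int) \<Rightarrow> bool" where
  "word_limit ws w \<longleftrightarrow> (\<forall>k. \<exists>N. \<forall>n\<ge>N. k < length (ws n) \<and> ws n ! k = w k)"

definition w_alpha :: "nat \<Rightarrow> int" where
  "w_alpha = (THE w. word_limit (\<lambda>n. (phi ^^ n) [1]) w)"

text \<open>w_[0] = 1, w_[n+1] = w_[n] w_[n] w_[n]', where w_[n]' changes the middle symbol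
  (position (3^n+1)/2, 1-based; index (3^n - 1) div 2, 0-based) to -1.\<close>
fun wn :: "nat \<Rightarrow> int list" where
  "wn 0 = [1]"
| "wn (Suc n) = wn n @ wn n @ (wn n)[(3 ^ n - 1) div 2 := -1]"

end

theory Submission
  imports Defs
begin

lemma mid_suc: "(3 ^ Suc n - 1) div 2 = 3 ^ n + ((3::nat) ^ n - 1) div 2"
proof -
  have "odd ((3::nat) ^ n)" by simp
  then obtain j where j: "(3::nat) ^ n = 2 * j + 1" by (metis oddE)
  show ?thesis by (simp add: j)
qed

lemma len_wn: "length (wn n) = 3 ^ n"
  by (induction n) auto

lemma mid_lt: "((3::nat) ^ n - 1) div 2 < 3 ^ n"
proof -
  have "(1::nat) \<le> 3 ^ n" by simp
  then show ?thesis by linarith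
qed

lemma mid_wn: "wn n ! ((3 ^ n - 1) div 2) = 1"
proof (induction n)
  case 0
  then show ?case by simp
next
  case (Suc n)
  have "wn (Suc n) ! ((3 ^ Suc n - 1) div 2) = wn (Suc n) ! (3 ^ n + (3 ^ n - 1) div 2)"
    by (simp only: mid_suc)
  also have "\<dots> = (wn n @ (wn n)[(3 ^ n - 1) div 2 := -1]) ! ((3 ^ n - 1) div 2)"
    by (simp add: nth_append len_wn)
  also have "\<dots> = 1" using Suc mid_lt[of n] by (simp add: nth_append len_wn)
  finally show ?case .
qed

lemma phi_append: "phi (xs @ ys) = phi xs @ phi ys"
  by (simp add: phi_def)

lemma phin_append: "(phi ^^ n) (xs @ ys) = (phi ^^ n) xs @ (phi ^^ n) ys"
  by (induction n) (auto simp: phi_append)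

lemma phin_split: "(phi ^^ n) [1::int] = wn n \<and> (phi ^^ n) [-1] = (wn n)[(3 ^ n - 1) div 2 := -1]"
proof (induction n)
  case 0
  then show ?case by simp
next
  case (Suc n)
  have a: "(phi ^^ Suc n) [1] = (phi ^^ n) [1,1,-1]"
    by (simp only: funpow_Suc_right o_apply) (simp add: phi_def phi_sym_def)
  have b: "(phi ^^ Suc n) [-1] = (phi ^^ n) [1,-1,-1]"
    by (simp only: funpow_Suc_right o_apply) (simp add: phi_def phi_sym_def)
  have a': "(phi ^^ n) [1,1,-1] = (phi ^^ n) [1] @ (phi ^^ n) [1] @ (phi ^^ n) [-1]"
    using phin_append[of n "[1]" "[1,-1]"] phin_append[of n "[1]" "[-1]"] by simp
  have b': "(phi ^^ n) [1,-1,-1] = (phi ^^ n) [1] @ (phi ^^ n) [-1] @ (phi ^^ n) [-1]"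
    using phin_append[of n "[1]" "[-1,-1]"] phin_append[of n "[-1]" "[-1]"] by simp
  have "(wn (Suc n))[(3 ^ Suc n - 1) div 2 := -1]
      = wn n @ (wn n)[(3 ^ n - 1) div 2 := -1] @ (wn n)[(3 ^ n - 1) div 2 := -1]"
    using mid_lt[of n] by (simp only: mid_suc) (simp add: list_update_append len_wn)
  then show ?case using a b a' b' Suc by simp
qed

lemma prefix_wn: "n \<le> m \<Longrightarrow> prefix (wn n) (wn m)"
proof (induction m rule: dec_induct)
  case base
  then show ?case by simp
next
  case (step m)
  then show ?case by (metis prefix_order.trans wn.simps(2) prefixI)
qed

lemma wn_nth: "k < 3 ^ n \<Longrightarrow> n \<le> m \<Longrightarrow> wn m ! k = wn n ! k"
proof -
  assume "k < 3 ^ n" "n \<le> m"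
  then obtain zs where "wn m = wn n @ zs" using prefix_wn by (metis prefixE)
  then show ?thesis using \<open>k < 3 ^ n\<close> by (simp add: nth_append len_wn)
qed

lemma lim_ex: "word_limit wn (\<lambda>k. wn k ! k)"
  unfolding word_limit_def
proof
  fix k
  have kl: "k < 3 ^ k" by (induction k) auto
  show "\<exists>N. \<forall>n\<ge>N. k < length (wn n) \<and> wn n ! k = wn k ! k"
  proof (intro exI allI impI conjI)
    fix n assume "k \<le> n"
    have "(3::nat) ^ k \<le> 3 ^ n" using \<open>k \<le> n\<close> by (simp add: power_increasing)
    then show "k < length (wn n)" using kl len_wn[of n] by linarith
    show "wn n ! k = wn k ! k" using wn_nth kl \<open>k \<le> n\<close> by blast
  qed
qed

lemma lim_uniq: "word_limit ws w \<Longrightarrow> word_limit ws v \<Longrightarrow> w = v"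
proof
  fix k
  assume "word_limit ws w" "word_limit ws v"
  then obtain N1 N2 where "\<forall>n\<ge>N1. k < length (ws n) \<and> ws n ! k = w k"
      "\<forall>n\<ge>N2. k < length (ws n) \<and> ws n ! k = v k" unfolding word_limit_def by blast
  then show "w k = v k" by (metis max.cobounded1 max.cobounded2)
qed

theorem mainTheorem3:
  shows "(\<forall>n. length (wn n) = 3 ^ n \<and> wn n ! ((3 ^ n - 1) div 2) = 1)
       \<and> (\<forall>n. prefix (wn n) (wn (Suc n)))
       \<and> (\<exists>!w. word_limit wn w)
       \<and> word_limit wn w_alpha"
proof (intro conjI allI)
  fix n show "length (wn n) = 3 ^ n" by (rule len_wn)
  show "wn n ! ((3 ^ n - 1) div 2) = 1" by (rule mid_wn)
  show "prefix (wn n) (wn (Suc n))" by (rule prefix_wn) simp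
next
  show ex1: "\<exists>!w. word_limit wn w" using lim_ex lim_uniq by blast
  have "(\<lambda>n. (phi ^^ n) [1]) = wn" using phin_split by auto
  then have "w_alpha = (THE w. word_limit wn w)" by (simp add: w_alpha_def)
  then show "word_limit wn w_alpha" using theI'[OF ex1] by simp
qed

end
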